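(* For every temporal oriented tree $\mathcal T$, the connectivity graph $G$ of $\mathcal T$ contains no even hole, i.e., no induced cycle of even length at least $6$.
   Context: A temporal digraph is a pair $(D,\lambda)$ with $D=(V,A)$ a finite digraph and $\lambda:A\to 2^{\{1,\dots,t_{\max}\}}$ giving the time-steps at which each arc is active. A temporal oriented tree $\mathcal T=(T,\lambda)$ is one whose underlying digraph $T$ is an orientation of a tree. A temporal path is a sequence $(v_1,v_2,t_1),\dots,(v_{k-1},v_k,t_{k-1})$ with pairwise distinct $v_i$, $\overrightarrow{v_iv_{i+1}}\in A$, $t_i\in\lambda(\overrightarrow{v_iv_{i+1}})$ and $t_1<\dots<t_{k-1}$. Two vertices $u\ne v$ are temporally connected if there is a temporal path from $u$ to $v$ or from $v$ to $u$. The connectivity graph of $\mathcal T$ is the undirected graph $G$ with $V(G)=V(T)$ and $uv\in E(G)$ iff $u\neq v$ and $u,v$ are temporally connected. *)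

theory Defs
  imports Main
begin

definition digraph :: "'a set \<Rightarrow> ('a \<times> 'a) set \<Rightarrow> bool" where
  "digraph V A \<longleftrightarrow> finite V \<and> A \<subseteq> V \<times> V"

definition und_adj :: "('a \<times> 'a) set \<Rightarrow> 'a \<Rightarrow> 'a \<Rightarrow> bool" where
  "und_adj A u v \<longleftrightarrow> (u, v) \<in> A \<or> (v, u) \<in> A"

definition is_cycle :: "('a \<Rightarrow> 'a \<Rightarrow> bool) \<Rightarrow> 'a set \<Rightarrow> 'a list \<Rightarrow> bool" where
  "is_cycle E V cs \<longleftrightarrow> length cs \<ge> 3 \<and> distinct cs \<and> set cs \<subseteq> V \<and>
     (\<forall>i < length cs. E (cs ! i) (cs ! ((i + 1) mod length cs)))"

definition is_induced_cycle :: "('a \<Rightarrow> 'a \<Rightarrow> bool) \<Rightarrow> 'a set \<Rightarrow> 'a list \<Rightarrow> bool" where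
  "is_induced_cycle E V cs \<longleftrightarrow> length cs \<ge> 3 \<and> distinct cs \<and> set cs \<subseteq> V \<and>
     (\<forall>i < length cs. \<forall>j < length cs.
        E (cs ! i) (cs ! j) \<longleftrightarrow> (j = (i + 1) mod length cs \<or> i = (j + 1) mod length cs))"

definition has_even_hole :: "('a \<Rightarrow> 'a \<Rightarrow> bool) \<Rightarrow> 'a set \<Rightarrow> bool" where
  "has_even_hole E V \<longleftrightarrow> (\<exists>cs. is_induced_cycle E V cs \<and> even (length cs) \<and> length cs \<ge> 6)"

definition oriented_tree :: "'a set \<Rightarrow> ('a \<times> 'a) set \<Rightarrow> bool" where
  "oriented_tree V A \<longleftrightarrow> digraph V A \<and>
     (\<forall>u v. (u, v) \<in> A \<longrightarrow> u \<noteq> v \<and> (v, u) \<notin> A) \<and>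
     (\<forall>u\<in>V. \<forall>v\<in>V. (u, v) \<in> {(x, y). und_adj A x y}\<^sup>*) \<and>
     \<not> (\<exists>cs. is_cycle (und_adj A) V cs)"

definition temporal_digraph :: "'a set \<Rightarrow> ('a \<times> 'a) set \<Rightarrow> nat \<Rightarrow> ('a \<times> 'a \<Rightarrow> nat set) \<Rightarrow> bool" where
  "temporal_digraph V A tmax lam \<longleftrightarrow> digraph V A \<and> (\<forall>a\<in>A. lam a \<subseteq> {1..tmax})"

definition temporal_path ::
  "('a \<times> 'a) set \<Rightarrow> ('a \<times> 'a \<Rightarrow> nat set) \<Rightarrow> 'a list \<Rightarrow> nat list \<Rightarrow> bool" where
  "temporal_path A lam vs ts \<longleftrightarrow> vs \<noteq> [] \<and> distinct vs \<and> length ts + 1 = length vs \<and>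
     (\<forall>i < length ts. (vs ! i, vs ! (i + 1)) \<in> A \<and> ts ! i \<in> lam (vs ! i, vs ! (i + 1))) \<and>
     sorted_wrt (<) ts"

definition temporally_reaches ::
  "('a \<times> 'a) set \<Rightarrow> ('a \<times> 'a \<Rightarrow> nat set) \<Rightarrow> 'a \<Rightarrow> 'a \<Rightarrow> bool" where
  "temporally_reaches A lam u w \<longleftrightarrow>
     (\<exists>vs ts. temporal_path A lam vs ts \<and> hd vs = u \<and> last vs = w)"

definition conn_graph ::
  "'a set \<Rightarrow> ('a \<times> 'a) set \<Rightarrow> ('a \<times> 'a \<Rightarrow> nat set) \<Rightarrow> 'a \<Rightarrow> 'a \<Rightarrow> bool" where
  "conn_graph V A lam u w \<longleftrightarrow> u \<in> V \<and> w \<in> V \<and> u \<noteq> w \<and>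
     (temporally_reaches A lam u w \<or> temporally_reaches A lam w u)"

end

theory Submission
  imports Defs "HOL-Library.Transitive_Closure_Table"
begin


definition uwalk :: "('a \<times> 'a) set \<Rightarrow> 'a list \<Rightarrow> bool" where
 "uwalk A xs \<longleftrightarrow> (\<forall>i. Suc i < length xs \<longrightarrow> und_adj A (xs!i) (xs!Suc i))"
definition avoids :: "'a list \<Rightarrow> 'a \<Rightarrow> 'a \<Rightarrow> bool" where
 "avoids xs x y \<longleftrightarrow> (\<forall>i. Suc i < length xs \<longrightarrow> {xs!i, xs!Suc i} \<noteq> {x,y})"
definition Rav :: "('a \<times> 'a) set \<Rightarrow> 'a \<Rightarrow> 'a \<Rightarrow> 'a \<Rightarrow> 'a \<Rightarrow> bool" where
 "Rav A x y a b \<longleftrightarrow> und_adj A a b \<and> {a,b} \<noteq> {x,y}"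

lemma Rav_sym: assumes "(Rav A x y)\<^sup>*\<^sup>* a b" shows "(Rav A x y)\<^sup>*\<^sup>* b a"
proof -
  have "symp (Rav A x y)" unfolding symp_def Rav_def und_adj_def by (auto simp: insert_commute)
  then have "symp ((Rav A x y)\<^sup>*\<^sup>*)" by (rule symp_rtranclp)
  then show ?thesis using assms by (rule sympD)
qed

lemma uwalk_Cons: "uwalk A (a # xs) \<Longrightarrow> uwalk A xs"
  unfolding uwalk_def
proof (intro allI impI)
  fix i assume a: "\<forall>i. Suc i < length (a#xs) \<longrightarrow> und_adj A ((a#xs) ! i) ((a#xs) ! Suc i)"
    and b: "Suc i < length xs"
  then have "Suc (Suc i) < length (a#xs)" by simp
  then have "und_adj A ((a#xs) ! Suc i) ((a#xs) ! Suc (Suc i))" using a by blast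
  then show "und_adj A (xs ! i) (xs ! Suc i)" by simp
qed

lemma avoids_Cons: "avoids (a # xs) x y \<Longrightarrow> avoids xs x y"
  unfolding avoids_def
proof (intro allI impI)
  fix i assume a: "\<forall>i. Suc i < length (a#xs) \<longrightarrow> {(a#xs) ! i, (a#xs) ! Suc i} \<noteq> {x,y}"
    and b: "Suc i < length xs"
  then have "Suc (Suc i) < length (a#xs)" by simp
  then have "{(a#xs) ! Suc i, (a#xs) ! Suc (Suc i)} \<noteq> {x,y}" using a by blast
  then show "{xs ! i, xs ! Suc i} \<noteq> {x,y}" by simp
qed

lemma avoids_rtr: "uwalk A xs \<Longrightarrow> avoids xs x y \<Longrightarrow> xs \<noteq> [] \<Longrightarrow> (Rav A x y)\<^sup>*\<^sup>* (hd xs) (last xs)"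
proof (induction xs)
  case Nil then show ?case by simp
next
  case (Cons a xs)
  note IH = Cons.IH and pr = Cons.prems
  show ?case
  proof (cases xs)
    case Nil then show ?thesis by simp
  next
    case (Cons b ys)
    have l: "Suc 0 < length (a # xs)" using Cons by simp
    have "und_adj A ((a#xs)!0) ((a#xs)!Suc 0)" "{(a#xs)!0, (a#xs)!Suc 0} \<noteq> {x,y}"
      using pr(1,2) l unfolding uwalk_def avoids_def by blast+
    then have r1: "Rav A x y a b" using Cons unfolding Rav_def by simp
    have "uwalk A xs" using pr(1) by (rule uwalk_Cons)
    moreover have "avoids xs x y" using pr(2) by (rule avoids_Cons)
    moreover have "xs \<noteq> []" using Cons by simp
    ultimately have r2: "(Rav A x y)\<^sup>*\<^sup>* (hd xs) (last xs)" by (rule IH)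
    have "(Rav A x y)\<^sup>*\<^sup>* a (last xs)" using r1 r2 Cons
      by (simp add: converse_rtranclp_into_rtranclp)
    then show ?thesis using Cons by simp
  qed
qed

lemma und_adj_V: "digraph V A \<Longrightarrow> und_adj A a b \<Longrightarrow> a \<in> V \<and> b \<in> V"
  unfolding digraph_def und_adj_def by auto

lemma no_bypass:
  assumes T: "oriented_tree V A" and xy: "und_adj A x y" and ne: "x \<noteq> y"
   and r: "(Rav A x y)\<^sup>*\<^sup>* x y"
  shows False
proof -
  from r obtain xs where "rtrancl_path (Rav A x y) x xs y" using rtranclp_eq_rtrancl_path by metis
  then obtain xs' where p: "rtrancl_path (Rav A x y) x xs' y" and d: "distinct (x#xs')"
    by (rule rtrancl_path_distinct)
  have D: "digraph V A" using T unfolding oriented_tree_def by blast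
  have xs'ne: "xs' \<noteq> []" using p ne by (cases rule: rtrancl_path.cases) auto
  have lst: "last xs' = y" using rtrancl_path_last p xs'ne by metis
  have steps: "\<And>i. i < length xs' \<Longrightarrow> Rav A x y ((x#xs')!i) (xs'!i)"
    using rtrancl_path_nth p by metis
  have len: "length xs' \<ge> 2"
  proof (rule ccontr)
    assume "\<not> 2 \<le> length xs'"
    moreover have "length xs' \<noteq> 0" using xs'ne by simp
    ultimately have "length xs' = 1" by linarith
    then have "xs' = [y]" using lst by (cases xs') auto
    then show False using steps[of 0] by (simp add: Rav_def)
  qed
  let ?zs = "x # xs'"
  have cyc: "is_cycle (und_adj A) V ?zs"
    unfolding is_cycle_def
  proof (intro conjI allI impI)
    show "3 \<le> length ?zs" using len by simp
    show "distinct ?zs" by (rule d)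
    show "set ?zs \<subseteq> V"
    proof
      fix z assume "z \<in> set ?zs"
      then obtain i where i: "i < length ?zs" "?zs ! i = z" by (metis in_set_conv_nth)
      show "z \<in> V"
      proof (cases i)
        case 0 then show ?thesis using i xy und_adj_V[OF D] by auto
      next
        case (Suc j) then have "j < length xs'" using i by simp
        then have "und_adj A (?zs!j) (xs'!j)" using steps Rav_def by metis
        then show ?thesis using i Suc und_adj_V[OF D] by auto
      qed
    qed
    fix i assume i: "i < length ?zs"
    show "und_adj A (?zs ! i) (?zs ! ((i + 1) mod length ?zs))"
    proof (cases "i < length xs'")
      case True
      then have "(i+1) mod length ?zs = Suc i" by simp
      then show ?thesis using steps[OF True] by (simp add: Rav_def)
    next
      case False
      then have "i = length xs'" using i by simp
      then have a: "(i+1) mod length ?zs = 0" "?zs ! i = y" using lst xs'ne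
        by (auto simp: last_conv_nth)
      have "?zs ! ((i+1) mod length ?zs) = x" unfolding a by simp
      then show ?thesis using xy a(2) unfolding und_adj_def by metis
    qed
  qed
  then show False using T unfolding oriented_tree_def by blast
qed

lemma edge_eq_idx:
  assumes "distinct ps" "Suc i < length ps" "Suc n < length ps" "{ps!i, ps!Suc i} = {ps!n, ps!Suc n}"
  shows "i = n"
proof -
  from assms(4) have "(ps!i = ps!n \<and> ps!Suc i = ps!Suc n) \<or> (ps!i = ps!Suc n \<and> ps!Suc i = ps!n)"
    by (auto simp: doubleton_eq_iff)
  then show ?thesis using assms(1-3) by (auto simp: nth_eq_iff_index_eq)
qed

lemma uwalk_take: "uwalk A xs \<Longrightarrow> uwalk A (take m xs)"
  unfolding uwalk_def by auto
lemma uwalk_drop: "uwalk A xs \<Longrightarrow> uwalk A (drop m xs)"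
  unfolding uwalk_def
proof (intro allI impI)
  fix i assume a: "\<forall>i. Suc i < length xs \<longrightarrow> und_adj A (xs ! i) (xs ! Suc i)"
    and b: "Suc i < length (drop m xs)"
  then have "Suc (m + i) < length xs" by simp
  then have "und_adj A (xs ! (m+i)) (xs ! Suc (m+i))" using a by blast
  then show "und_adj A (drop m xs ! i) (drop m xs ! Suc i)" using b by simp
qed

lemma path_edge_needed:
  assumes T: "oriented_tree V A" and d: "distinct ps" and w: "uwalk A ps" and n: "Suc n < length ps"
   and r: "(Rav A (ps!n) (ps!Suc n))\<^sup>*\<^sup>* (hd ps) (last ps)"
  shows False
proof -
  let ?x = "ps!n" and ?y = "ps!Suc n"
  let ?t = "take (Suc n) ps" and ?d = "drop (Suc n) ps"
  have at: "avoids ?t ?x ?y" unfolding avoids_def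
  proof (intro allI impI)
    fix i assume "Suc i < length ?t"
    then have "Suc i < Suc n" by simp
    then show "{?t!i, ?t!Suc i} \<noteq> {?x,?y}" using edge_eq_idx[OF d, of i n] n by auto
  qed
  have ad: "avoids ?d ?x ?y" unfolding avoids_def
  proof (intro allI impI)
    fix i assume "Suc i < length ?d"
    then have "Suc (Suc n + i) < length ps" by simp
    then show "{?d!i, ?d!Suc i} \<noteq> {?x,?y}" using edge_eq_idx[OF d, of "Suc n + i" n] n by auto
  qed
  have r1: "(Rav A ?x ?y)\<^sup>*\<^sup>* (hd ?t) (last ?t)"
    by (rule avoids_rtr[OF uwalk_take[OF w] at]) (use n in auto)
  have r2: "(Rav A ?x ?y)\<^sup>*\<^sup>* (hd ?d) (last ?d)"
    by (rule avoids_rtr[OF uwalk_drop[OF w] ad]) (use n in auto)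
  have h1: "hd ?t = hd ps" using n by (cases ps) auto
  have h2: "last ?t = ?x" using n by (metis Suc_lessD last_snoc take_Suc_conv_app_nth)
  have h3: "hd ?d = ?y" using n by (simp add: hd_drop_conv_nth)
  have h4: "last ?d = last ps" using n by simp
  have "(Rav A ?x ?y)\<^sup>*\<^sup>* (hd ps) ?x" using r1 unfolding h1 h2 .
  then have c1: "(Rav A ?x ?y)\<^sup>*\<^sup>* ?x (hd ps)" by (rule Rav_sym)
  have "(Rav A ?x ?y)\<^sup>*\<^sup>* ?y (last ps)" using r2 unfolding h3 h4 .
  then have c3: "(Rav A ?x ?y)\<^sup>*\<^sup>* (last ps) ?y" by (rule Rav_sym)
  have "(Rav A ?x ?y)\<^sup>*\<^sup>* ?x ?y" using c1 r c3 by (meson rtranclp_trans)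
  moreover have "und_adj A ?x ?y" using w n unfolding uwalk_def by blast
  moreover have "?x \<noteq> ?y" using d n by (simp add: nth_eq_iff_index_eq)
  ultimately show False using no_bypass[OF T] by blast
qed



lemma tp_arc: "temporal_path A lam vs ts \<Longrightarrow> Suc i < length vs \<Longrightarrow> (vs!i, vs!Suc i) \<in> A \<and> ts!i \<in> lam (vs!i, vs!Suc i)"
  unfolding temporal_path_def by auto

lemma tp_uwalk: "temporal_path A lam vs ts \<Longrightarrow> uwalk A vs"
  unfolding uwalk_def und_adj_def using tp_arc by blast

lemma tp_distinct: "temporal_path A lam vs ts \<Longrightarrow> distinct vs"
  unfolding temporal_path_def by auto

lemma tp_ne: "temporal_path A lam vs ts \<Longrightarrow> vs \<noteq> []"
  unfolding temporal_path_def by auto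

lemma tp_len: "temporal_path A lam vs ts \<Longrightarrow> length vs = Suc (length ts)"
  unfolding temporal_path_def by auto

lemma tp_sorted: "temporal_path A lam vs ts \<Longrightarrow> sorted_wrt (<) ts"
  unfolding temporal_path_def by auto

lemma tp_intro:
  assumes "vs \<noteq> []" "distinct vs" "length ts + 1 = length vs"
    "\<And>i. i < length ts \<Longrightarrow> (vs!i, vs!Suc i) \<in> A \<and> ts!i \<in> lam (vs!i, vs!Suc i)"
    "sorted_wrt (<) ts"
  shows "temporal_path A lam vs ts"
  using assms unfolding temporal_path_def by auto

lemma tp_take:
  assumes P: "temporal_path A lam vs ts" and n: "0 < n" "n \<le> length vs"
  shows "temporal_path A lam (take n vs) (take (n-1) ts)"
proof -
  have L: "length vs = Suc (length ts)" using tp_len[OF P] .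
  show ?thesis
  proof (rule tp_intro)
    show "take n vs \<noteq> []" using n tp_ne[OF P] by simp
    show "distinct (take n vs)" using tp_distinct[OF P] by simp
    show "length (take (n - 1) ts) + 1 = length (take n vs)" using n L by simp
    show "sorted_wrt (<) (take (n - 1) ts)" using tp_sorted[OF P] by (simp add: sorted_wrt_take)
  next
    fix i assume i: "i < length (take (n - 1) ts)"
    then have i2: "Suc i < length vs" "Suc i < n" using L n by auto
    show "(take n vs ! i, take n vs ! Suc i) \<in> A \<and> take (n - 1) ts ! i \<in> lam (take n vs ! i, take n vs ! Suc i)"
      using tp_arc[OF P i2(1)] i i2 by simp
  qed
qed

lemma tp_drop:
  assumes P: "temporal_path A lam vs ts" and n: "n < length vs"
  shows "temporal_path A lam (drop n vs) (drop n ts)"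
proof -
  have L: "length vs = Suc (length ts)" using tp_len[OF P] .
  show ?thesis
  proof (rule tp_intro)
    show "drop n vs \<noteq> []" using n by simp
    show "distinct (drop n vs)" using tp_distinct[OF P] by simp
    show "length (drop n ts) + 1 = length (drop n vs)" using n L by simp
    show "sorted_wrt (<) (drop n ts)" using tp_sorted[OF P] by (simp add: sorted_wrt_drop)
  next
    fix i assume i: "i < length (drop n ts)"
    then have i2: "Suc (n + i) < length vs" using L n by auto
    have "n + i < length ts" using i by simp
    then show "(drop n vs ! i, drop n vs ! Suc i) \<in> A \<and> drop n ts ! i \<in> lam (drop n vs ! i, drop n vs ! Suc i)"
      using tp_arc[OF P i2] n by simp
  qed
qed

lemma tp_sub:
  assumes P: "temporal_path A lam vs ts" and z: "z \<in> set vs"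
  shows "(z = hd vs \<or> temporally_reaches A lam (hd vs) z) \<and> (z = last vs \<or> temporally_reaches A lam z (last vs))"
proof -
  obtain i where i: "i < length vs" "vs ! i = z" using z by (metis in_set_conv_nth)
  have P1: "temporal_path A lam (take (Suc i) vs) (take i ts)"
    using tp_take[OF P, of "Suc i"] i by simp
  have "hd (take (Suc i) vs) = hd vs" using i by (cases vs) auto
  moreover have "last (take (Suc i) vs) = z" using i by (metis last_snoc take_Suc_conv_app_nth)
  ultimately have r1: "temporally_reaches A lam (hd vs) z"
    unfolding temporally_reaches_def using P1 by metis
  have P2: "temporal_path A lam (drop i vs) (drop i ts)" using tp_drop[OF P i(1)] .
  have "hd (drop i vs) = z" using i by (simp add: hd_drop_conv_nth)
  moreover have "last (drop i vs) = last vs" using i by simp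
  ultimately have r2: "temporally_reaches A lam z (last vs)"
    unfolding temporally_reaches_def using P2 by metis
  show ?thesis using r1 r2 by blast
qed

lemma tp_setV:
  assumes D: "digraph V A" and P: "temporal_path A lam vs ts" and h: "hd vs \<in> V"
  shows "set vs \<subseteq> V"
proof
  fix z assume "z \<in> set vs"
  then obtain i where i: "i < length vs" "vs ! i = z" by (metis in_set_conv_nth)
  show "z \<in> V"
  proof (cases i)
    case 0 then show ?thesis using i h tp_ne[OF P] by (simp add: hd_conv_nth)
  next
    case (Suc j)
    then have "(vs!j, vs!Suc j) \<in> A" using tp_arc[OF P, of j] i by simp
    then show ?thesis using D i Suc unfolding digraph_def by auto
  qed
qed

lemma tp_app:
  assumes P1: "temporal_path A lam (xs @ [m]) ts1" and P2: "temporal_path A lam (m # ys) ts2"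
    and disj: "set xs \<inter> set (m # ys) = {}"
    and tm: "\<forall>a\<in>set ts1. \<forall>b\<in>set ts2. a < b"
  shows "temporal_path A lam (xs @ m # ys) (ts1 @ ts2)"
proof -
  have L1: "length ts1 = length xs" using tp_len[OF P1] by simp
  have L2: "length ts2 = length ys" using tp_len[OF P2] by simp
  show ?thesis
  proof (rule tp_intro)
    show "xs @ m # ys \<noteq> []" by simp
    show "distinct (xs @ m # ys)" using tp_distinct[OF P1] tp_distinct[OF P2] disj by auto
    show "length (ts1 @ ts2) + 1 = length (xs @ m # ys)" using L1 L2 by simp
    show "sorted_wrt (<) (ts1 @ ts2)" using tp_sorted[OF P1] tp_sorted[OF P2] tm
      by (simp add: sorted_wrt_append)
  next
    fix i assume i: "i < length (ts1 @ ts2)"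
    show "((xs @ m # ys) ! i, (xs @ m # ys) ! Suc i) \<in> A \<and>
          (ts1 @ ts2) ! i \<in> lam ((xs @ m # ys) ! i, (xs @ m # ys) ! Suc i)"
    proof (cases "i < length xs")
      case True
      have e1: "(xs @ m # ys) ! i = (xs @ [m]) ! i" using True by (simp add: nth_append)
      have e2: "(xs @ m # ys) ! Suc i = (xs @ [m]) ! Suc i"
        using True by (cases "Suc i < length xs") (auto simp: nth_append)
      have "((xs @ [m]) ! i, (xs @ [m]) ! Suc i) \<in> A \<and> ts1 ! i \<in> lam ((xs @ [m]) ! i, (xs @ [m]) ! Suc i)"
        using tp_arc[OF P1, of i] True by simp
      then show ?thesis using e1 e2 True L1 by (simp add: nth_append)
    next
      case False
      define j where "j = i - length xs"
      have j: "i = length xs + j" "j < length ys" using False i L1 L2 unfolding j_def by auto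
      have e1: "(xs @ m # ys) ! i = (m # ys) ! j" using j by (simp add: nth_append)
      have e2: "(xs @ m # ys) ! Suc i = (m # ys) ! Suc j" using j by (simp add: nth_append)
      have e3: "(ts1 @ ts2) ! i = ts2 ! j" using j L1 by (simp add: nth_append)
      have "((m # ys) ! j, (m # ys) ! Suc j) \<in> A \<and> ts2 ! j \<in> lam ((m # ys) ! j, (m # ys) ! Suc j)"
        using tp_arc[OF P2, of j] j by simp
      then show ?thesis using e1 e2 e3 by simp
    qed
  qed
qed



lemma antisym_A: "oriented_tree V A \<Longrightarrow> (u,v) \<in> A \<Longrightarrow> (v,u) \<notin> A"
  unfolding oriented_tree_def by blast

lemma tp_join:
  assumes T: "oriented_tree V A"
    and P1: "temporal_path A lam v1 t1" and P2: "temporal_path A lam v2 t2"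
    and p: "0 < p" "Suc p < length v1" and q: "Suc q < length v2"
    and m: "v1 ! p = v2 ! q" and tm: "t1 ! (p - 1) < t2 ! q"
  shows "temporally_reaches A lam (hd v1) (last v2)"
proof -
  let ?m = "v1 ! p"
  have L1: "length v1 = Suc (length t1)" using tp_len[OF P1] .
  have L2: "length v2 = Suc (length t2)" using tp_len[OF P2] .
  have d1: "distinct v1" using tp_distinct[OF P1] .
  have d2: "distinct v2" using tp_distinct[OF P2] .
  have Pa: "temporal_path A lam (take (Suc p) v1) (take p t1)"
    using tp_take[OF P1, of "Suc p"] p by simp
  have ea: "take (Suc p) v1 = take p v1 @ [?m]" using p by (simp add: take_Suc_conv_app_nth)
  have Pb: "temporal_path A lam (drop q v2) (drop q t2)" using tp_drop[OF P2] q by simp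
  have eb: "drop q v2 = ?m # drop (Suc q) v2" using q m by (simp add: Cons_nth_drop_Suc)
  have tms: "\<forall>a\<in>set (take p t1). \<forall>b\<in>set (drop q t2). a < b"
  proof (intro ballI)
    fix a b assume a: "a \<in> set (take p t1)" and b: "b \<in> set (drop q t2)"
    obtain i where i: "i < p" "a = t1 ! i" using a p L1
      by (auto simp: in_set_conv_nth)
    obtain j where j0: "j < length t2 - q" "b = t2 ! (q + j)" using b
      by (auto simp: in_set_conv_nth)
    then have j: "q + j < length t2" "b = t2 ! (q + j)" by auto
    have "t1 ! i \<le> t1 ! (p - 1)"
    proof (cases "i = p - 1")
      case True then show ?thesis by simp
    next
      case False then have "i < p - 1" using i by linarith
      moreover have "p - 1 < length t1" using p L1 by simp
      ultimately show ?thesis using sorted_wrt_nth_less[OF tp_sorted[OF P1], of i "p - 1"] by simp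
    qed
    moreover have "t2 ! q \<le> t2 ! (q + j)"
      using sorted_wrt_nth_less[OF tp_sorted[OF P2], of q "q + j"] j by (cases j) auto
    ultimately show "a < b" using tm i j by simp
  qed
  have disj: "set (take p v1) \<inter> set (?m # drop (Suc q) v2) = {}"
  proof (rule ccontr)
    assume "set (take p v1) \<inter> set (?m # drop (Suc q) v2) \<noteq> {}"
    then obtain z where z1: "z \<in> set (take p v1)" and z2: "z \<in> set (?m # drop (Suc q) v2)" by blast
    obtain r where r: "r < p" "v1 ! r = z" using z1 p L1 by (auto simp: in_set_conv_nth)
    have zm: "z \<noteq> ?m" using r d1 p by (auto simp: nth_eq_iff_index_eq)
    then have "z \<in> set (drop (Suc q) v2)" using z2 by simp
    then obtain s where s0: "s < length v2 - Suc q" "z = v2 ! (Suc q + s)" by (auto simp: in_set_conv_nth)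
    then have s: "Suc q + s < length v2" "v2 ! (Suc q + s) = z" by auto
    define ps where "ps = drop r (take (Suc p) v1)"
    have lps: "length ps = Suc p - r" using p r unfolding ps_def by simp
    have psn: "\<And>i. i < length ps \<Longrightarrow> ps ! i = v1 ! (r + i)" unfolding ps_def using p r by simp
    have dps: "distinct ps" unfolding ps_def using d1 by simp
    have wps: "uwalk A ps" unfolding ps_def by (rule uwalk_drop[OF uwalk_take[OF tp_uwalk[OF P1]]])
    define n where "n = p - 1 - r"
    have n: "Suc n < length ps" using lps r unfolding n_def by simp
    have psx: "ps ! n = v1 ! (p - 1)" using psn[of n] n r unfolding n_def by simp
    have psm: "ps ! Suc n = ?m" using psn[of "Suc n"] n r unfolding n_def by simp
    have "ps \<noteq> []" using lps r by auto
    then have hps: "hd ps = z" using psn[of 0] lps r by (simp add: hd_conv_nth)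
    have "last ps = ps ! (length ps - 1)" using \<open>ps \<noteq> []\<close> by (simp add: last_conv_nth)
    moreover have "length ps - 1 = p - r" using lps r by simp
    moreover have "ps ! (p - r) = ?m" using psn[of "p - r"] lps r by simp
    ultimately have lstps: "last ps = ?m" by simp
    define ws where "ws = drop q (take (Suc (Suc q + s)) v2)"
    have lws: "length ws = Suc (Suc s)" using s unfolding ws_def by simp
    have wsn: "\<And>i. i < length ws \<Longrightarrow> ws ! i = v2 ! (q + i)" unfolding ws_def using s by simp
    have wws: "uwalk A ws" unfolding ws_def by (rule uwalk_drop[OF uwalk_take[OF tp_uwalk[OF P2]]])
    have wne: "ws \<noteq> []" using lws by auto
    have hws: "hd ws = ?m" using wsn[of 0] lws m wne by (simp add: hd_conv_nth)
    have lstws: "last ws = z" using wsn[of "Suc s"] lws s wne by (simp add: last_conv_nth)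
    have arc1: "(v1 ! (p - 1), ?m) \<in> A" using tp_arc[OF P1, of "p - 1"] p by simp
    have xm: "v1 ! (p - 1) \<noteq> ?m" using d1 p by (simp add: nth_eq_iff_index_eq)
    have av: "avoids ws (v1 ! (p - 1)) ?m" unfolding avoids_def
    proof (intro allI impI notI)
      fix i assume i: "Suc i < length ws" and eq: "{ws ! i, ws ! Suc i} = {v1 ! (p - 1), ?m}"
      have w1: "ws ! i = v2 ! (q + i)" "ws ! Suc i = v2 ! Suc (q + i)" using wsn i by auto
      have qi: "Suc (q + i) < length v2" using i lws s by simp
      show False
      proof (cases i)
        case 0
        then have "v2 ! Suc q = v1 ! (p - 1)" using eq w1 m xm by (auto simp: doubleton_eq_iff)
        moreover have "(v2 ! q, v2 ! Suc q) \<in> A" using tp_arc[OF P2] q by blast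
        ultimately show False using arc1 m antisym_A[OF T] by metis
      next
        case (Suc i')
        have "?m \<in> {v2 ! (q + i), v2 ! Suc (q + i)}" using eq w1 by auto
        then show False using m d2 qi q Suc by (auto simp: nth_eq_iff_index_eq)
      qed
    qed
    have "(Rav A (v1 ! (p - 1)) ?m)\<^sup>*\<^sup>* ?m z"
      using avoids_rtr[OF wws av wne] hws lstws by simp
    then have "(Rav A (ps ! n) (ps ! Suc n))\<^sup>*\<^sup>* (hd ps) (last ps)"
      using psx psm hps lstps Rav_sym by metis
    then show False using path_edge_needed[OF T dps wps n] by blast
  qed
  have P: "temporal_path A lam (take p v1 @ ?m # drop (Suc q) v2) (take p t1 @ drop q t2)"
    using tp_app[OF Pa[unfolded ea] Pb[unfolded eb] disj tms] .
  have "hd (take p v1 @ ?m # drop (Suc q) v2) = hd v1" using p by (cases v1) auto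
  moreover have "last (take p v1 @ ?m # drop (Suc q) v2) = last v2"
    using q by (metis eb last_ConsR last_appendR last_drop drop_eq_Nil list.distinct(1) not_less)
  ultimately show ?thesis unfolding temporally_reaches_def using P by metis
qed

lemma tp_cross:
  assumes T: "oriented_tree V A"
    and P1: "temporal_path A lam v1 t1" and P2: "temporal_path A lam v2 t2"
    and m1: "m \<in> set v1" and m2: "m \<in> set v2"
    and n1: "m \<noteq> hd v1" "m \<noteq> last v1" and n2: "m \<noteq> hd v2" "m \<noteq> last v2"
  shows "temporally_reaches A lam (hd v1) (last v2) \<or> temporally_reaches A lam (hd v2) (last v1)"
proof -
  obtain p where p: "p < length v1" "v1 ! p = m" using m1 by (metis in_set_conv_nth)
  obtain q where q: "q < length v2" "v2 ! q = m" using m2 by (metis in_set_conv_nth)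
  have ne1: "v1 \<noteq> []" and ne2: "v2 \<noteq> []" using m1 m2 by auto
  have p0: "0 < p" using p n1 ne1 by (cases p) (auto simp: hd_conv_nth)
  have p1: "Suc p < length v1"
  proof (rule ccontr)
    assume "\<not> Suc p < length v1" then have "p = length v1 - 1" using p by linarith
    then show False using n1 p ne1 by (simp add: last_conv_nth)
  qed
  have q0: "0 < q" using q n2 ne2 by (cases q) (auto simp: hd_conv_nth)
  have q1: "Suc q < length v2"
  proof (rule ccontr)
    assume "\<not> Suc q < length v2" then have "q = length v2 - 1" using q by linarith
    then show False using n2 q ne2 by (simp add: last_conv_nth)
  qed
  have L1: "length v1 = Suc (length t1)" using tp_len[OF P1] .
  have L2: "length v2 = Suc (length t2)" using tp_len[OF P2] .
  have s1: "t1 ! (p - 1) < t1 ! p"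
    using sorted_wrt_nth_less[OF tp_sorted[OF P1], of "p - 1" p] p0 p1 L1 by simp
  have s2: "t2 ! (q - 1) < t2 ! q"
    using sorted_wrt_nth_less[OF tp_sorted[OF P2], of "q - 1" q] q0 q1 L2 by simp
  have "t1 ! (p - 1) < t2 ! q \<or> t2 ! (q - 1) < t1 ! p" using s1 s2 by linarith
  then show ?thesis
  proof
    assume "t1 ! (p - 1) < t2 ! q"
    then show ?thesis using tp_join[OF T P1 P2 p0 p1 q1] p q by simp
  next
    assume "t2 ! (q - 1) < t1 ! p"
    then show ?thesis using tp_join[OF T P2 P1 q0 q1 p1] p q by simp
  qed
qed



definition fwdA :: "('a \<times> 'a) set \<Rightarrow> 'a list \<Rightarrow> bool" where
  "fwdA A xs \<longleftrightarrow> (\<forall>n. Suc n < length xs \<longrightarrow> (xs!n, xs!Suc n) \<in> A)"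
definition bwdA :: "('a \<times> 'a) set \<Rightarrow> 'a list \<Rightarrow> bool" where
  "bwdA A xs \<longleftrightarrow> (\<forall>n. Suc n < length xs \<longrightarrow> (xs!Suc n, xs!n) \<in> A)"

lemma fwd_rev: assumes "fwdA A xs" shows "bwdA A (rev xs)"
  unfolding bwdA_def
proof (intro allI impI)
  fix n assume n: "Suc n < length (rev xs)"
  define i where "i = length xs - Suc (Suc n)"
  have i: "Suc i < length xs" "Suc i = length xs - Suc n" using n unfolding i_def by auto
  have "(xs!i, xs!Suc i) \<in> A" using assms i unfolding fwdA_def by blast
  moreover have "rev xs ! Suc n = xs ! i" "rev xs ! n = xs ! Suc i" using n i unfolding i_def
    by (auto simp: rev_nth)
  ultimately show "(rev xs ! Suc n, rev xs ! n) \<in> A" by simp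
qed

lemma uwalk_rev: assumes "uwalk A xs" shows "uwalk A (rev xs)"
  unfolding uwalk_def
proof (intro allI impI)
  fix n assume n: "Suc n < length (rev xs)"
  define i where "i = length xs - Suc (Suc n)"
  have i: "Suc i < length xs" "Suc i = length xs - Suc n" using n unfolding i_def by auto
  have "und_adj A (xs!i) (xs!Suc i)" using assms i unfolding uwalk_def by blast
  moreover have "rev xs ! Suc n = xs ! i" "rev xs ! n = xs ! Suc i" using n i unfolding i_def
    by (auto simp: rev_nth)
  ultimately show "und_adj A (rev xs ! n) (rev xs ! Suc n)" by (auto simp: und_adj_def)
qed

lemma tp_fwd: "temporal_path A lam vs ts \<Longrightarrow> fwdA A vs"
  unfolding fwdA_def using tp_arc by blast

lemma orient:
  assumes P: "temporal_path A lam vs ts" and e: "(hd vs = a \<and> last vs = b) \<or> (hd vs = b \<and> last vs = a)"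
  defines "Ov \<equiv> (if hd vs = a then vs else rev vs)"
  shows "hd Ov = a" "last Ov = b" "distinct Ov" "set Ov = set vs" "uwalk A Ov" "fwdA A Ov \<or> bwdA A Ov"
proof -
  have ne: "vs \<noteq> []" using tp_ne[OF P] .
  show "hd Ov = a" using e ne unfolding Ov_def by (auto simp: hd_rev)
  show "last Ov = b" using e ne unfolding Ov_def by (auto simp: last_rev)
  show "distinct Ov" using tp_distinct[OF P] unfolding Ov_def by auto
  show "set Ov = set vs" unfolding Ov_def by auto
  show "uwalk A Ov" using tp_uwalk[OF P] uwalk_rev unfolding Ov_def by auto
  show "fwdA A Ov \<or> bwdA A Ov" using tp_fwd[OF P] fwd_rev unfolding Ov_def by auto
qed

lemma two_out:
  assumes T: "oriented_tree V A" and P: "temporal_path A lam vs ts"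
    and n: "Suc n < length vs" and n': "Suc n' < length vs"
    and e: "{vs!n, vs!Suc n} = {m,a}" and e': "{vs!n', vs!Suc n'} = {m,b}"
    and ab: "a \<noteq> b"
    and o: "((m,a) \<in> A \<and> (m,b) \<in> A) \<or> ((a,m) \<in> A \<and> (b,m) \<in> A)"
  shows False
proof -
  have d: "distinct vs" using tp_distinct[OF P] .
  have A1: "(vs!n, vs!Suc n) \<in> A" using tp_arc[OF P n] by blast
  have A2: "(vs!n', vs!Suc n') \<in> A" using tp_arc[OF P n'] by blast
  have as: "\<And>u v. (u,v) \<in> A \<Longrightarrow> (v,u) \<notin> A" using antisym_A[OF T] by blast
  from e have e1: "(vs!n = m \<and> vs!Suc n = a) \<or> (vs!n = a \<and> vs!Suc n = m)" by (auto simp: doubleton_eq_iff)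
  from e' have e2: "(vs!n' = m \<and> vs!Suc n' = b) \<or> (vs!n' = b \<and> vs!Suc n' = m)" by (auto simp: doubleton_eq_iff)
  show False
  proof (cases "vs!n = m")
    case True
    then have a: "vs!Suc n = a" using e1 d n by (auto simp: nth_eq_iff_index_eq)
    show False
    proof (cases "vs!n' = m")
      case True
      then have "n = n'" using \<open>vs!n = m\<close> d n n' by (auto simp: nth_eq_iff_index_eq)
      then show False using e1 e2 a ab True by auto
    next
      case False
      then have "vs!n' = b" "vs!Suc n' = m" using e2 by auto
      then show False using A1 A2 o a True as by metis
    qed
  next
    case False
    then have a: "vs!n = a" "vs!Suc n = m" using e1 by auto
    show False
    proof (cases "vs!Suc n' = m")
      case True
      then have "n = n'" using a d n n' by (auto simp: nth_eq_iff_index_eq)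
      then show False using e1 e2 a ab True False by auto
    next
      case False
      then have "vs!n' = m" "vs!Suc n' = b" using e2 by auto
      then show False using A1 A2 o a as by metis
    qed
  qed
qed

lemma cp_avoid:
  assumes dx: "distinct xs" and dy: "distinct ys" and t: "take L xs = take L ys"
    and L: "0 < L" "L < length xs" "L < length ys" and ne: "xs!L \<noteq> ys!L"
  shows "avoids xs (xs!(L-1)) (ys!L)"
  unfolding avoids_def
proof (intro allI impI notI)
  fix i assume i: "Suc i < length xs" and eq: "{xs!i, xs!Suc i} = {xs!(L-1), ys!L}"
  have tk: "\<And>j. j < L \<Longrightarrow> xs!j = ys!j" using t by (metis nth_take)
  from eq have "(xs!i = xs!(L-1) \<and> xs!Suc i = ys!L) \<or> (xs!i = ys!L \<and> xs!Suc i = xs!(L-1))"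
    by (auto simp: doubleton_eq_iff)
  then show False
  proof
    assume h: "xs!i = xs!(L-1) \<and> xs!Suc i = ys!L"
    then have "i = L - 1" using dx i L by (auto simp: nth_eq_iff_index_eq)
    then show False using h ne L by simp
  next
    assume h: "xs!i = ys!L \<and> xs!Suc i = xs!(L-1)"
    then have "Suc i = L - 1" using dx i L by (auto simp: nth_eq_iff_index_eq)
    then have "i < L" by simp
    then have "ys!i = ys!L" using h tk by simp
    then have "i = L" using dy L \<open>i < L\<close> by (auto simp: nth_eq_iff_index_eq)
    then show False using \<open>i < L\<close> by simp
  qed
qed

lemma ends_rtr: "uwalk A xs \<Longrightarrow> xs \<noteq> [] \<Longrightarrow> avoids xs x y \<Longrightarrow>
   (Rav A x y)\<^sup>*\<^sup>* (hd xs) (last xs) \<and> (Rav A x y)\<^sup>*\<^sup>* (last xs) (hd xs)"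
  using avoids_rtr Rav_sym by metis



lemma ar1:
  fixes x j k :: nat
  assumes "x < k" "j < k" "6 \<le> k" "x \<noteq> j" "x \<noteq> (if Suc j = k then 0 else Suc j)"
   "j = (if Suc x = k then 0 else Suc x) \<or> x = (if Suc j = k then 0 else Suc j)"
   "(if Suc j = k then 0 else Suc j) = (if Suc x = k then 0 else Suc x) \<or> x = (if Suc (if Suc j = k then 0 else Suc j) = k then 0 else Suc (if Suc j = k then 0 else Suc j))"
  shows False
proof (cases "Suc j = k")
  case True
  then show False using assms by (cases "Suc x = k") auto
next
  case False
  then show False using assms by (cases "Suc x = k"; cases "Suc (Suc j) = k") auto
qed


theorem mainTheorem11:
  fixes V :: "'a set" and A :: "('a \<times> 'a) set" and tmax :: nat
    and lam :: "'a \<times> 'a \<Rightarrow> nat set"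
  assumes "temporal_digraph V A tmax lam"
    and "oriented_tree V A"
  shows "\<not> has_even_hole (conn_graph V A lam) V"
proof
  assume "has_even_hole (conn_graph V A lam) V"
  then obtain cs where ic: "is_induced_cycle (conn_graph V A lam) V cs" and k6: "length cs \<ge> 6"
    unfolding has_even_hole_def by blast
  define E where "E = conn_graph V A lam"
  define k where "k = length cs"
  define nx where "nx = (\<lambda>j. if Suc j = k then 0 else Suc j)"
  have T: "oriented_tree V A" by (rule assms(2))
  have D: "digraph V A" using T unfolding oriented_tree_def by blast
  have k6': "k \<ge> 6" using k6 unfolding k_def .
  have dcs: "distinct cs" and scs: "set cs \<subseteq> V" using ic unfolding is_induced_cycle_def by auto
  have csV: "\<And>x. x < k \<Longrightarrow> cs!x \<in> V" using scs unfolding k_def by auto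
  have csd: "\<And>x y. x < k \<Longrightarrow> y < k \<Longrightarrow> cs!x = cs!y \<longleftrightarrow> x = y"
    using dcs unfolding k_def by (simp add: nth_eq_iff_index_eq)
  have modnx: "\<And>x. x < k \<Longrightarrow> (x + 1) mod k = nx x"
    unfolding nx_def by auto
  have nxk: "\<And>x. x < k \<Longrightarrow> nx x < k" unfolding nx_def using k6' by auto
  have adj0: "\<And>x y. x < k \<Longrightarrow> y < k \<Longrightarrow> E (cs!x) (cs!y) \<longleftrightarrow> (y = nx x \<or> x = nx y)"
    using ic modnx unfolding is_induced_cycle_def E_def k_def by auto
  have Esym: "\<And>u w. E u w \<Longrightarrow> E w u" unfolding E_def conn_graph_def by auto
  have Eintro: "\<And>u w. u \<in> V \<Longrightarrow> w \<in> V \<Longrightarrow> u \<noteq> w \<Longrightarrow> temporally_reaches A lam u w \<Longrightarrow> E u w"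
    unfolding E_def conn_graph_def by auto
  have "\<forall>j. \<exists>vs ts. j < k \<longrightarrow> temporal_path A lam vs ts \<and>
      ((hd vs = cs!j \<and> last vs = cs!(nx j)) \<or> (hd vs = cs!(nx j) \<and> last vs = cs!j))"
  proof
    fix j
    show "\<exists>vs ts. j < k \<longrightarrow> temporal_path A lam vs ts \<and>
      ((hd vs = cs!j \<and> last vs = cs!(nx j)) \<or> (hd vs = cs!(nx j) \<and> last vs = cs!j))"
    proof (cases "j < k")
      case True
      then have "E (cs!j) (cs!(nx j))" using adj0 nxk by auto
      then show ?thesis unfolding E_def conn_graph_def temporally_reaches_def by blast
    qed auto
  qed
  from choice[OF this] obtain Qv where "\<forall>j. \<exists>ts. j < k \<longrightarrow> temporal_path A lam (Qv j) ts \<and>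
      ((hd (Qv j) = cs!j \<and> last (Qv j) = cs!(nx j)) \<or> (hd (Qv j) = cs!(nx j) \<and> last (Qv j) = cs!j))"
    by blast
  from choice[OF this] obtain Qt where Q': "\<forall>j. j < k \<longrightarrow> temporal_path A lam (Qv j) (Qt j) \<and>
      ((hd (Qv j) = cs!j \<and> last (Qv j) = cs!(nx j)) \<or> (hd (Qv j) = cs!(nx j) \<and> last (Qv j) = cs!j))"
    by blast
  have Q: "\<And>j. j < k \<Longrightarrow> temporal_path A lam (Qv j) (Qt j) \<and>
      ((hd (Qv j) = cs!j \<and> last (Qv j) = cs!(nx j)) \<or> (hd (Qv j) = cs!(nx j) \<and> last (Qv j) = cs!j))"
    using Q' by blast
  have QP: "\<And>j. j < k \<Longrightarrow> temporal_path A lam (Qv j) (Qt j)" using Q by blast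
  have QE: "\<And>j. j < k \<Longrightarrow> (hd (Qv j) = cs!j \<and> last (Qv j) = cs!(nx j)) \<or> (hd (Qv j) = cs!(nx j) \<and> last (Qv j) = cs!j)"
    using Q by blast
  have QV: "\<And>j. j < k \<Longrightarrow> set (Qv j) \<subseteq> V"
  proof -
    fix j assume j: "j < k"
    have "hd (Qv j) \<in> V" using QE[OF j] csV j nxk by auto
    then show "set (Qv j) \<subseteq> V" using tp_setV[OF D QP[OF j]] by blast
  qed
  have F1: "\<And>x j. x < k \<Longrightarrow> j < k \<Longrightarrow> cs!x \<in> set (Qv j) \<Longrightarrow> x = j \<or> x = nx j"
  proof (rule ccontr)
    fix x j assume x: "x < k" and j: "j < k" and z: "cs!x \<in> set (Qv j)" and nn: "\<not> (x = j \<or> x = nx j)"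
    have n1: "cs!x \<noteq> cs!j" "cs!x \<noteq> cs!(nx j)" using nn csd x j nxk by auto
    have sub: "(cs!x = hd (Qv j) \<or> temporally_reaches A lam (hd (Qv j)) (cs!x)) \<and>
        (cs!x = last (Qv j) \<or> temporally_reaches A lam (cs!x) (last (Qv j)))"
      using tp_sub[OF QP[OF j] z] .
    have "E (cs!x) (cs!j) \<and> E (cs!x) (cs!(nx j))"
      using QE[OF j]
    proof
      assume h: "hd (Qv j) = cs!j \<and> last (Qv j) = cs!(nx j)"
      then have "temporally_reaches A lam (cs!j) (cs!x)" "temporally_reaches A lam (cs!x) (cs!(nx j))"
        using sub n1 by auto
      then have "E (cs!j) (cs!x)" "E (cs!x) (cs!(nx j))"
        using Eintro csV x j nxk n1 by auto
      then show ?thesis using Esym by blast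
    next
      assume h: "hd (Qv j) = cs!(nx j) \<and> last (Qv j) = cs!j"
      then have "temporally_reaches A lam (cs!(nx j)) (cs!x)" "temporally_reaches A lam (cs!x) (cs!j)"
        using sub n1 by auto
      then have "E (cs!(nx j)) (cs!x)" "E (cs!x) (cs!j)"
        using Eintro csV x j nxk n1 by auto
      then show ?thesis using Esym by blast
    qed
    then have a1: "j = nx x \<or> x = nx j" and a2: "nx j = nx x \<or> x = nx (nx j)"
      using adj0[OF x j] adj0[OF x nxk[OF j]] by blast+
    show False using ar1[of x k j] x j k6' nn a1 a2 unfolding nx_def by blast
  qed
  have nx0: "nx 0 = 1" and nx1: "nx 1 = 2" and nx2: "nx 2 = 3" and nx3: "nx 3 = 4"
    using k6' unfolding nx_def by auto
  have nxS: "\<And>j. Suc j < k \<Longrightarrow> nx j = Suc j" unfolding nx_def by auto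
  have nxl: "nx (k - 1) = 0" using k6' unfolding nx_def by auto
  have k0: "0 < k" "1 < k" "2 < k" using k6' by auto
  define P1 where "P1 = (if hd (Qv 1) = cs!1 then Qv 1 else rev (Qv 1))"
  define P0 where "P0 = (if hd (Qv 0) = cs!1 then Qv 0 else rev (Qv 0))"
  have e1: "(hd (Qv 1) = cs!1 \<and> last (Qv 1) = cs!2) \<or> (hd (Qv 1) = cs!2 \<and> last (Qv 1) = cs!1)"
    using QE[OF k0(2)] nx1 by simp
  have e0: "(hd (Qv 0) = cs!1 \<and> last (Qv 0) = cs!0) \<or> (hd (Qv 0) = cs!0 \<and> last (Qv 0) = cs!1)"
    using QE[OF k0(1)] nx0 by auto
  note o1 = orient[OF QP[OF k0(2)] e1, folded P1_def]
  note o0 = orient[OF QP[OF k0(1)] e0, folded P0_def]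
  have P1ne: "P1 \<noteq> []" using o1(4) tp_ne[OF QP[OF k0(2)]] by auto
  have P0ne: "P0 \<noteq> []" using o0(4) tp_ne[OF QP[OF k0(1)]] by auto
  define S where "S = {n. n \<le> length P0 \<and> n \<le> length P1 \<and> take n P0 = take n P1}"
  have finS: "finite S" unfolding S_def by (rule finite_subset[of _ "{..length P0}"]) auto
  have S1: "1 \<in> S"
  proof -
    have "take 1 P0 = [hd P0]" using P0ne by (cases P0) auto
    moreover have "take 1 P1 = [hd P1]" using P1ne by (cases P1) auto
    ultimately show ?thesis unfolding S_def using o0(1) o1(1) P0ne P1ne
      by (simp add: Suc_leI)
  qed
  define L where "L = Max S"
  have LS: "L \<in> S" using finS S1 unfolding L_def by (intro Max_in) auto
  have Lmax: "\<And>n. n \<in> S \<Longrightarrow> n \<le> L" using finS unfolding L_def by simp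
  have L1: "1 \<le> L" using Lmax S1 by blast
  have tk: "take L P0 = take L P1" and Lle: "L \<le> length P0" "L \<le> length P1"
    using LS unfolding S_def by auto
  have LP1: "L < length P1"
  proof (rule ccontr)
    assume "\<not> L < length P1"
    then have "L = length P1" using Lle by simp
    then have "P1 = take L P0" using tk by simp
    then have "set P1 \<subseteq> set P0" by (metis set_take_subset)
    moreover have "cs!2 \<in> set P1" using o1(2) P1ne by (metis last_in_set)
    ultimately have "cs!2 \<in> set (Qv 0)" using o0(4) by auto
    then have "(2::nat) = 0 \<or> 2 = nx 0" using F1[OF k0(3) k0(1)] by blast
    then show False using nx0 by simp
  qed
  have LP0: "L < length P0"
  proof (rule ccontr)
    assume "\<not> L < length P0"
    then have "L = length P0" using Lle by simp
    then have "P0 = take L P1" using tk by simp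
    then have "set P0 \<subseteq> set P1" by (metis set_take_subset)
    moreover have "cs!0 \<in> set P0" using o0(2) P0ne by (metis last_in_set)
    ultimately have "cs!0 \<in> set (Qv 1)" using o1(4) by auto
    then have "(0::nat) = 1 \<or> 0 = nx 1" using F1[OF k0(1) k0(2)] by blast
    then show False using nx1 by simp
  qed
  have neL: "P0!L \<noteq> P1!L"
  proof
    assume eq: "P0!L = P1!L"
    have "take (Suc L) P0 = take (Suc L) P1" using tk eq LP0 LP1 by (simp add: take_Suc_conv_app_nth)
    then have "Suc L \<in> S" using LP0 LP1 unfolding S_def by simp
    then show False using Lmax[of "Suc L"] by simp
  qed
  define m where "m = P1!(L-1)"
  define a where "a = P1!L"
  define b where "b = P0!L"
  have tkn: "\<And>i. i < L \<Longrightarrow> P0!i = P1!i" using tk by (metis nth_take)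
  have m0: "P0!(L-1) = m" using tkn[of "L-1"] L1 unfolding m_def by simp
  have avP1: "avoids P1 m b"
    using cp_avoid[OF o1(3) o0(3) tk[symmetric] _ LP1 LP0] L1 neL unfolding m_def b_def by auto
  have avP0: "avoids P0 m a"
    using cp_avoid[OF o0(3) o1(3) tk _ LP0 LP1] L1 neL m0 unfolding a_def by auto
  have step: "\<And>x y j. j < k - 1 \<Longrightarrow> avoids (Qv j) x y \<Longrightarrow> (Rav A x y)\<^sup>*\<^sup>* (cs!j) (cs!Suc j)"
  proof -
    fix x y j assume j: "j < k - 1" and av: "avoids (Qv j) x y"
    have jk: "j < k" using j by simp
    have "nx j = Suc j" using j nxS by simp
    then show "(Rav A x y)\<^sup>*\<^sup>* (cs!j) (cs!Suc j)"
      using ends_rtr[OF tp_uwalk[OF QP[OF jk]] tp_ne[OF QP[OF jk]] av] QE[OF jk] by auto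
  qed
  have stepl: "\<And>x y. avoids (Qv (k-1)) x y \<Longrightarrow> (Rav A x y)\<^sup>*\<^sup>* (cs!(k-1)) (cs!0)"
  proof -
    fix x y assume av: "avoids (Qv (k-1)) x y"
    have jk: "k - 1 < k" using k6' by simp
    show "(Rav A x y)\<^sup>*\<^sup>* (cs!(k-1)) (cs!0)"
      using ends_rtr[OF tp_uwalk[OF QP[OF jk]] tp_ne[OF QP[OF jk]] av] QE[OF jk] nxl by auto
  qed
  have chain: "\<And>x y n. 2 + n \<le> k - 1 \<Longrightarrow> (\<forall>j. 2 \<le> j \<and> j < 2 + n \<longrightarrow> avoids (Qv j) x y) \<Longrightarrow>
      (Rav A x y)\<^sup>*\<^sup>* (cs!2) (cs!(2+n))"
  proof -
    fix x y n
    show "2 + n \<le> k - 1 \<Longrightarrow> (\<forall>j. 2 \<le> j \<and> j < 2 + n \<longrightarrow> avoids (Qv j) x y) \<Longrightarrow>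
      (Rav A x y)\<^sup>*\<^sup>* (cs!2) (cs!(2+n))"
    proof (induction n)
      case 0 then show ?case by simp
    next
      case (Suc n)
      then have r: "(Rav A x y)\<^sup>*\<^sup>* (cs!2) (cs!(2+n))" by simp
      have "avoids (Qv (2+n)) x y" using Suc.prems by simp
      then have "(Rav A x y)\<^sup>*\<^sup>* (cs!(2+n)) (cs!Suc (2+n))" using step Suc.prems by simp
      then show ?case using r by simp
    qed
  qed
  have kk: "2 + (k - 3) = k - 1" using k6' by simp
  have ex_a: "\<exists>j. 2 \<le> j \<and> j \<le> k - 1 \<and> \<not> avoids (Qv j) m a"
  proof (rule ccontr)
    assume "\<not> ?thesis"
    then have av: "\<forall>j. 2 \<le> j \<and> j \<le> k - 1 \<longrightarrow> avoids (Qv j) m a" by blast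
    have r1: "(Rav A m a)\<^sup>*\<^sup>* (cs!2) (cs!(k-1))"
      using chain[of "k-3" m a] av kk by simp
    have r2: "(Rav A m a)\<^sup>*\<^sup>* (cs!(k-1)) (cs!0)" using stepl av k6' by simp
    have r3: "(Rav A m a)\<^sup>*\<^sup>* (cs!0) (cs!1)" using ends_rtr[OF o0(5) P0ne avP0] o0(1,2) by simp
    have "(Rav A m a)\<^sup>*\<^sup>* (cs!2) (cs!1)" using r1 r2 r3 by (meson rtranclp_trans)
    then have "(Rav A m a)\<^sup>*\<^sup>* (hd P1) (last P1)" using Rav_sym o1(1,2) by simp
    moreover have "Suc (L-1) < length P1" "P1!(L-1) = m" "P1!Suc (L-1) = a"
      using L1 LP1 unfolding m_def a_def by auto
    ultimately show False using path_edge_needed[OF T o1(3) o1(5)] by metis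
  qed
  have ex_b: "\<exists>j. 2 \<le> j \<and> j \<le> k - 1 \<and> \<not> avoids (Qv j) m b"
  proof (rule ccontr)
    assume "\<not> ?thesis"
    then have av: "\<forall>j. 2 \<le> j \<and> j \<le> k - 1 \<longrightarrow> avoids (Qv j) m b" by blast
    have r1: "(Rav A m b)\<^sup>*\<^sup>* (cs!2) (cs!(k-1))"
      using chain[of "k-3" m b] av kk by simp
    have r2: "(Rav A m b)\<^sup>*\<^sup>* (cs!(k-1)) (cs!0)" using stepl av k6' by simp
    have r3: "(Rav A m b)\<^sup>*\<^sup>* (cs!1) (cs!2)" using ends_rtr[OF o1(5) P1ne avP1] o1(1,2) by simp
    have "(Rav A m b)\<^sup>*\<^sup>* (cs!1) (cs!0)" using r3 r1 r2 by (meson rtranclp_trans)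
    then have "(Rav A m b)\<^sup>*\<^sup>* (hd P0) (last P0)" using o0(1,2) by simp
    moreover have "Suc (L-1) < length P0" "P0!(L-1) = m" "P0!Suc (L-1) = b"
      using L1 LP0 m0 unfolding b_def by auto
    ultimately show False using path_edge_needed[OF T o0(3) o0(5)] by metis
  qed
  obtain j where j: "2 \<le> j" "j \<le> k - 1" and nj: "\<not> avoids (Qv j) m a" using ex_a by blast
  then obtain i where i: "Suc i < length (Qv j)" "{Qv j!i, Qv j!Suc i} = {m, a}"
    unfolding avoids_def by blast
  obtain j' where j': "2 \<le> j'" "j' \<le> k - 1" and nj': "\<not> avoids (Qv j') m b" using ex_b by blast
  then obtain i' where i': "Suc i' < length (Qv j')" "{Qv j'!i', Qv j'!Suc i'} = {m, b}"
    unfolding avoids_def by blast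
  have jk: "j < k" "j' < k" using j j' k6' by auto
  have mj: "m \<in> set (Qv j)"
  proof -
    have "m \<in> {Qv j!i, Qv j!Suc i}" using i(2) by auto
    then show ?thesis using i(1) by (auto intro: nth_mem)
  qed
  have mj': "m \<in> set (Qv j')"
  proof -
    have "m \<in> {Qv j'!i', Qv j'!Suc i'}" using i'(2) by auto
    then show ?thesis using i'(1) by (auto intro: nth_mem)
  qed
  have m1s: "m \<in> set (Qv 1)" using o1(4) L1 LP1 unfolding m_def by (metis less_imp_diff_less nth_mem)
  have m0s: "m \<in> set (Qv 0)" using o0(4) L1 LP0 m0 by (metis less_imp_diff_less nth_mem)
  have mncs: "m \<notin> set cs"
  proof
    assume "m \<in> set cs"
    then obtain x where x: "x < k" "cs!x = m" unfolding k_def by (metis in_set_conv_nth)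
    have "x = 1 \<or> x = 2" using F1[OF x(1) k0(2)] m1s x nx1 by auto
    moreover have "x = 0 \<or> x = 1" using F1[OF x(1) k0(1)] m0s x nx0 by auto
    ultimately have x1: "x = 1" by auto
    then have "1 = j \<or> 1 = nx j" using F1[OF k0(2) jk(1)] mj x by auto
    moreover have "nx j \<noteq> 1"
    proof (cases "j = k - 1")
      case True then show ?thesis using nxl by simp
    next
      case False then have "Suc j < k" using j by simp
      then show ?thesis using nxS j by simp
    qed
    ultimately show False using j by simp
  qed
  have L2: "2 \<le> L"
  proof (rule ccontr)
    assume "\<not> 2 \<le> L" then have "L = 1" using L1 by simp
    then have "m = hd P1" using P1ne unfolding m_def by (simp add: hd_conv_nth)
    then have "m = cs!1" using o1(1) by simp
    then show False using mncs k0 unfolding k_def by auto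
  qed
  define z where "z = P1!(L-2)"
  have z0: "P0!(L-2) = z" using tkn[of "L-2"] L2 unfolding z_def by simp
  have idx: "Suc (L-2) = L-1" "Suc (L-1) = L" using L2 by auto
  have lP1: "Suc (L-2) < length P1" "Suc (L-1) < length P1" using LP1 idx by auto
  have lP0: "Suc (L-2) < length P0" "Suc (L-1) < length P0" using LP0 idx by auto
  have or1: "((z,m) \<in> A \<and> (m,a) \<in> A) \<or> ((m,z) \<in> A \<and> (a,m) \<in> A)"
    using o1(6)
  proof
    assume f: "fwdA A P1"
    have "(P1!(L-2), P1!Suc (L-2)) \<in> A" "(P1!(L-1), P1!Suc (L-1)) \<in> A"
      using f lP1 unfolding fwdA_def by blast+
    then show ?thesis using idx unfolding z_def m_def a_def by simp
  next
    assume f: "bwdA A P1"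
    have "(P1!Suc (L-2), P1!(L-2)) \<in> A" "(P1!Suc (L-1), P1!(L-1)) \<in> A"
      using f lP1 unfolding bwdA_def by blast+
    then show ?thesis using idx unfolding z_def m_def a_def by simp
  qed
  have or0: "((z,m) \<in> A \<and> (m,b) \<in> A) \<or> ((m,z) \<in> A \<and> (b,m) \<in> A)"
    using o0(6)
  proof
    assume f: "fwdA A P0"
    have "(P0!(L-2), P0!Suc (L-2)) \<in> A" "(P0!(L-1), P0!Suc (L-1)) \<in> A"
      using f lP0 unfolding fwdA_def by blast+
    then show ?thesis using idx z0 m0 unfolding b_def by simp
  next
    assume f: "bwdA A P0"
    have "(P0!Suc (L-2), P0!(L-2)) \<in> A" "(P0!Suc (L-1), P0!(L-1)) \<in> A"
      using f lP0 unfolding bwdA_def by blast+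
    then show ?thesis using idx z0 m0 unfolding b_def by simp
  qed
  have orm: "((m,a) \<in> A \<and> (m,b) \<in> A) \<or> ((a,m) \<in> A \<and> (b,m) \<in> A)"
    using or1 or0 antisym_A[OF T] by blast
  have ab: "a \<noteq> b" using neL unfolding a_def b_def by simp
  have jj': "j \<noteq> j'"
  proof
    assume "j = j'"
    then show False using two_out[OF T QP[OF jk(1)] i(1) _ i(2) _ ab orm] i' by simp
  qed
  have endp: "\<And>u. u < k \<Longrightarrow> (\<exists>x\<in>{u, nx u}. hd (Qv u) = cs!x) \<and> (\<exists>x\<in>{u, nx u}. last (Qv u) = cs!x)"
    using QE by blast
  have X: "\<And>u w. u < k \<Longrightarrow> w < k \<Longrightarrow> m \<in> set (Qv u) \<Longrightarrow> m \<in> set (Qv w) \<Longrightarrow>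
     (\<forall>x\<in>{u, nx u}. \<forall>y\<in>{w, nx w}. x \<noteq> y \<and> y \<noteq> nx x \<and> x \<noteq> nx y) \<Longrightarrow> False"
  proof -
    fix u w assume u: "u < k" and w: "w < k" and mu: "m \<in> set (Qv u)" and mw: "m \<in> set (Qv w)"
      and cond: "\<forall>x\<in>{u, nx u}. \<forall>y\<in>{w, nx w}. x \<noteq> y \<and> y \<noteq> nx x \<and> x \<noteq> nx y"
    obtain xh where xh: "xh \<in> {u, nx u}" "hd (Qv u) = cs!xh" using endp[OF u] by blast
    obtain xl where xl: "xl \<in> {u, nx u}" "last (Qv u) = cs!xl" using endp[OF u] by blast
    obtain yh where yh: "yh \<in> {w, nx w}" "hd (Qv w) = cs!yh" using endp[OF w] by blast
    obtain yl where yl: "yl \<in> {w, nx w}" "last (Qv w) = cs!yl" using endp[OF w] by blast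
    have lt: "xh < k" "xl < k" "yh < k" "yl < k" using xh xl yh yl u w nxk by auto
    have incs: "\<And>x. x < k \<Longrightarrow> cs!x \<in> set cs" unfolding k_def by simp
    have nm: "m \<noteq> hd (Qv u)" "m \<noteq> last (Qv u)" "m \<noteq> hd (Qv w)" "m \<noteq> last (Qv w)"
      using mncs incs lt xh xl yh yl by metis+
    have "temporally_reaches A lam (hd (Qv u)) (last (Qv w)) \<or> temporally_reaches A lam (hd (Qv w)) (last (Qv u))"
      using tp_cross[OF T QP[OF u] QP[OF w] mu mw nm] .
    then show False
    proof
      assume r: "temporally_reaches A lam (hd (Qv u)) (last (Qv w))"
      have c: "xh \<noteq> yl \<and> yl \<noteq> nx xh \<and> xh \<noteq> nx yl" using cond xh yl by blast
      then have "cs!xh \<noteq> cs!yl" using csd lt by simp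
      then have "E (cs!xh) (cs!yl)" using Eintro csV lt r xh yl by simp
      then show False using adj0[OF lt(1) lt(4)] c by blast
    next
      assume r: "temporally_reaches A lam (hd (Qv w)) (last (Qv u))"
      have c: "xl \<noteq> yh \<and> yh \<noteq> nx xl \<and> xl \<noteq> nx yh" using cond xl yh by blast
      then have "cs!yh \<noteq> cs!xl" using csd lt by auto
      then have "E (cs!yh) (cs!xl)" using Eintro csV lt r xl yh by simp
      then show False using adj0[OF lt(3) lt(2)] c by blast
    qed
  qed
  have case_j: "\<And>jj. 2 \<le> jj \<Longrightarrow> jj \<le> k - 1 \<Longrightarrow> m \<in> set (Qv jj) \<Longrightarrow> jj = 2 \<or> jj = k - 1"
  proof -
    fix jj assume j1: "2 \<le> jj" and j2: "jj \<le> k - 1" and mjj: "m \<in> set (Qv jj)"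
    show "jj = 2 \<or> jj = k - 1"
    proof (rule ccontr)
      assume nn: "\<not> (jj = 2 \<or> jj = k - 1)"
      then have jlt: "jj < k - 1" "3 \<le> jj" using j1 j2 by auto
      have nj: "nx jj = Suc jj" using nxS jlt by simp
      show False
      proof (cases "jj = k - 2")
        case True
        have "nx (k - 2) = k - 1" using nxS[of "k-2"] k6' by simp
        have "k - 2 \<noteq> 3" "k - 1 \<noteq> 3" "k - 2 \<noteq> 2" "k - 1 \<noteq> 2" "k - 2 \<noteq> 1" "k - 1 \<noteq> 1" using k6' by auto
        then show False using X[OF k0(2) _ m1s mjj] True nx1 nx2 nxl k6' jlt \<open>nx (k - 2) = k - 1\<close> by auto
      next
        case False
        then have "Suc (Suc jj) < k" using jlt by simp
        then have "nx (Suc jj) = Suc (Suc jj)" using nxS by simp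
        have "jj < k" using jlt by simp
        then show False using X[OF k0(1) \<open>jj < k\<close> m0s mjj] nx0 nx1 nj k6' jlt False \<open>nx (Suc jj) = Suc (Suc jj)\<close> by auto
      qed
    qed
  qed
  have "j = 2 \<or> j = k - 1" using case_j j mj by blast
  moreover have "j' = 2 \<or> j' = k - 1" using case_j j' mj' by blast
  ultimately have "m \<in> set (Qv 2) \<and> m \<in> set (Qv (k - 1))" using jj' mj mj' by auto
  moreover have "k - 1 \<noteq> 2 \<and> k - 1 \<noteq> 3 \<and> k - 1 \<noteq> 4" "k - 1 < k" using k6' by auto
  ultimately show False using X[OF k0(3), of "k - 1"] nx2 nx3 nx0 nxl by auto
qed

end
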